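(* Let $\vec{\mathcal G}$ be an ergodic graph of a deterministic two-player mean-payoff game and suppose $r\in\mathcal P^{\sigma,\tau}$ for some $(\sigma,\tau)\in\Xi$. If $(i,j)\in E$ with $i\in V_{\min}$ and $j\ne\tau(i)$, then $(x,r_{-ij})\in\mathcal P^{\sigma,\tau}$ for all $x>\lambda^{\sigma,\tau}(r)+u^{\sigma,\tau}_i(r)-u^{\sigma,\tau}_j(r)$. If $(i,j)\in E$ with $i\in V_{\max}$ and $j\ne\sigma(i)$, then $(x,r_{-ij})\in\mathcal P^{\sigma,\tau}$ for all $x<\lambda^{\sigma,\tau}(r)+u^{\sigma,\tau}_i(r)-u^{\sigma,\tau}_j(r)$.
   Context: Setting: directed graph $\vec{\mathcal G}=([n],E)$ without multiple edges (loops allowed), each vertex having an outgoing edge, $[n]=V_{\max}\uplus V_{\min}$, weights $r\in\mathbb R^E=\mathbb R^m$; $(x,r_{-ij})$ is $r$ with coordinate $ij$ replaced by $x$. Ergodic equation in $(\lambda,u)$: $\lambda+u_i=\max_{(i,j)\in E}\{r_{ij}+u_j\}$ ($i\in V_{\max}$), $\lambda+u_i=\min_{(i,j)\in E}\{r_{ij}+u_j\}$ ($i\in V_{\min}$); $u$ is a bias if $(\lambda,u)$ solves it; the graph is ergodic if it is solvable for every $r$. Policies $\sigma,\tau$ choose outgoing edges at Max/Min vertices; a pair is bias-induced if some bias $u$ has $\sigma(i)$ attaining the max and $\tau(i)$ attaining the min at every vertex. $\vec{\mathcal G}^{\sigma,\tau}$ keeps at each vertex only the chosen edge; $\Xi$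 is the set of pairs with exactly one directed cycle in $\vec{\mathcal G}^{\sigma,\tau}$. $\lambda^{\sigma,\tau}(r)$ is the mean weight of that cycle and $u^{\sigma,\tau}(r)_l$ is the total weight, for edge weights $r_{ij}-\lambda^{\sigma,\tau}(r)$, of the path in $\vec{\mathcal G}^{\sigma,\tau}$ from $l$ to the smallest-index vertex on the cycle. $\mathcal P^{\sigma,\tau}$ is the set of $r$ such that $(\sigma,\tau)$ is the only pair of bias-induced policies for weights $r$. *)

theory Defs
  imports Complex_Main
begin

text \<open>Vertices are the natural numbers 1..n; edges are pairs; weights are functions on pairs
  (only values on E matter).\<close>

definition game_graph :: "nat \<Rightarrow> (nat \<times> nat) set \<Rightarrow> nat set \<Rightarrow> nat set \<Rightarrow> bool" where
  "game_graph n E Vmax Vmin \<equiv> E \<subseteq> {1..n} \<times> {1..n} \<and> (\<forall>i\<in>{1..n}. \<exists>j. (i,j) \<in> E)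
     \<and> Vmax \<union> Vmin = {1..n} \<and> Vmax \<inter> Vmin = {}"

definition is_bias :: "(nat \<times> nat) set \<Rightarrow> nat set \<Rightarrow> nat set \<Rightarrow> (nat \<times> nat \<Rightarrow> real)
    \<Rightarrow> real \<Rightarrow> (nat \<Rightarrow> real) \<Rightarrow> bool" where
  "is_bias E Vmax Vmin r lam u \<equiv>
     (\<forall>i\<in>Vmax. lam + u i = Max {r (i,j) + u j | j. (i,j) \<in> E}) \<and>
     (\<forall>i\<in>Vmin. lam + u i = Min {r (i,j) + u j | j. (i,j) \<in> E})"

definition ergodic :: "(nat \<times> nat) set \<Rightarrow> nat set \<Rightarrow> nat set \<Rightarrow> bool" where
  "ergodic E Vmax Vmin \<equiv> \<forall>r. \<exists>lam u. is_bias E Vmax Vmin r lam u"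

definition policies :: "(nat \<times> nat) set \<Rightarrow> nat set \<Rightarrow> nat set \<Rightarrow> (nat \<Rightarrow> nat) \<Rightarrow> (nat \<Rightarrow> nat) \<Rightarrow> bool" where
  "policies E Vmax Vmin \<sigma> \<tau> \<equiv> (\<forall>i\<in>Vmax. (i, \<sigma> i) \<in> E) \<and> (\<forall>i\<in>Vmin. (i, \<tau> i) \<in> E)"

definition bias_induced :: "(nat \<times> nat) set \<Rightarrow> nat set \<Rightarrow> nat set \<Rightarrow> (nat \<times> nat \<Rightarrow> real)
    \<Rightarrow> (nat \<Rightarrow> nat) \<Rightarrow> (nat \<Rightarrow> nat) \<Rightarrow> bool" where
  "bias_induced E Vmax Vmin r \<sigma> \<tau> \<equiv> policies E Vmax Vmin \<sigma> \<tau> \<and>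
     (\<exists>lam u. is_bias E Vmax Vmin r lam u \<and>
        (\<forall>i\<in>Vmax. r (i, \<sigma> i) + u (\<sigma> i) = Max {r (i,j) + u j | j. (i,j) \<in> E}) \<and>
        (\<forall>i\<in>Vmin. r (i, \<tau> i) + u (\<tau> i) = Min {r (i,j) + u j | j. (i,j) \<in> E}))"

definition pol_map :: "nat set \<Rightarrow> (nat \<Rightarrow> nat) \<Rightarrow> (nat \<Rightarrow> nat) \<Rightarrow> nat \<Rightarrow> nat" where
  "pol_map Vmax \<sigma> \<tau> i = (if i \<in> Vmax then \<sigma> i else \<tau> i)"

definition cycles :: "nat \<Rightarrow> (nat \<Rightarrow> nat) \<Rightarrow> nat set set" where
  "cycles n f = {C. \<exists>i\<in>{1..n}. \<exists>k>0. (f ^^ k) i = i \<and> C = {(f ^^ m) i | m. True}}"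

definition Xi :: "nat \<Rightarrow> (nat \<times> nat) set \<Rightarrow> nat set \<Rightarrow> nat set \<Rightarrow> ((nat \<Rightarrow> nat) \<times> (nat \<Rightarrow> nat)) set" where
  "Xi n E Vmax Vmin = {(\<sigma>, \<tau>). policies E Vmax Vmin \<sigma> \<tau> \<and> (\<exists>!C. C \<in> cycles n (pol_map Vmax \<sigma> \<tau>))}"

definition the_cycle :: "nat \<Rightarrow> nat set \<Rightarrow> (nat \<Rightarrow> nat) \<Rightarrow> (nat \<Rightarrow> nat) \<Rightarrow> nat set" where
  "the_cycle n Vmax \<sigma> \<tau> = (THE C. C \<in> cycles n (pol_map Vmax \<sigma> \<tau>))"

definition lam_pol :: "nat \<Rightarrow> nat set \<Rightarrow> (nat \<Rightarrow> nat) \<Rightarrow> (nat \<Rightarrow> nat) \<Rightarrow> (nat \<times> nat \<Rightarrow> real) \<Rightarrow> real" where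
  "lam_pol n Vmax \<sigma> \<tau> r =
     (let C = the_cycle n Vmax \<sigma> \<tau>; f = pol_map Vmax \<sigma> \<tau>
      in (\<Sum>i\<in>C. r (i, f i)) / real (card C))"

text \<open>u^{sigma,tau}(r)_l: weight (with weights r - lambda) of the path in G^{sigma,tau}
  from l to the smallest-index vertex of the cycle.\<close>
definition u_pol :: "nat \<Rightarrow> nat set \<Rightarrow> (nat \<Rightarrow> nat) \<Rightarrow> (nat \<Rightarrow> nat) \<Rightarrow> (nat \<times> nat \<Rightarrow> real) \<Rightarrow> nat \<Rightarrow> real" where
  "u_pol n Vmax \<sigma> \<tau> r l =
     (let f = pol_map Vmax \<sigma> \<tau>; c = Min (the_cycle n Vmax \<sigma> \<tau>);
          k = (LEAST k. (f ^^ k) l = c)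
      in (\<Sum>t<k. r ((f ^^ t) l, f ((f ^^ t) l)) - lam_pol n Vmax \<sigma> \<tau> r))"

text \<open>P^{sigma,tau}: weights for which (sigma,tau) is the only bias-induced pair
  (policies compared on their domains Vmax resp. Vmin).\<close>
definition P_set :: "(nat \<times> nat) set \<Rightarrow> nat set \<Rightarrow> nat set \<Rightarrow> (nat \<Rightarrow> nat) \<Rightarrow> (nat \<Rightarrow> nat)
    \<Rightarrow> (nat \<times> nat \<Rightarrow> real) set" where
  "P_set E Vmax Vmin \<sigma> \<tau> = {r. bias_induced E Vmax Vmin r \<sigma> \<tau> \<and>
     (\<forall>\<sigma>' \<tau>'. bias_induced E Vmax Vmin r \<sigma>' \<tau>' \<longrightarrow>
        (\<forall>i\<in>Vmax. \<sigma>' i = \<sigma> i) \<and> (\<forall>i\<in>Vmin. \<tau>' i = \<tau> i))}"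

end

theory Submission
  imports Defs
begin

definition goodpair :: "(nat \<times> nat) set \<Rightarrow> nat set \<Rightarrow> nat set \<Rightarrow> (nat \<times> nat \<Rightarrow> real) \<Rightarrow> real \<Rightarrow> (nat \<Rightarrow> real) \<Rightarrow> (nat \<Rightarrow> nat) \<Rightarrow> (nat \<Rightarrow> nat) \<Rightarrow> bool" where
 "goodpair E Vmax Vmin r lam u \<sigma> \<tau> \<equiv> policies E Vmax Vmin \<sigma> \<tau> \<and>
   (\<forall>k\<in>Vmax. r(k,\<sigma> k) + u(\<sigma> k) = lam + u k \<and> (\<forall>l. (k,l)\<in>E \<longrightarrow> r(k,l) + u l \<le> lam + u k)) \<and>
   (\<forall>k\<in>Vmin. r(k,\<tau> k) + u(\<tau> k) = lam + u k \<and> (\<forall>l. (k,l)\<in>E \<longrightarrow> lam + u k \<le> r(k,l) + u l))"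

definition strictp :: "(nat \<times> nat) set \<Rightarrow> nat set \<Rightarrow> nat set \<Rightarrow> (nat \<times> nat \<Rightarrow> real) \<Rightarrow> real \<Rightarrow> (nat \<Rightarrow> real) \<Rightarrow> (nat \<Rightarrow> nat) \<Rightarrow> (nat \<Rightarrow> nat) \<Rightarrow> bool" where
 "strictp E Vmax Vmin r lam u \<sigma> \<tau> \<equiv>
   (\<forall>k\<in>Vmax. \<forall>l. (k,l)\<in>E \<longrightarrow> l \<noteq> \<sigma> k \<longrightarrow> r(k,l) + u l < lam + u k) \<and>
   (\<forall>k\<in>Vmin. \<forall>l. (k,l)\<in>E \<longrightarrow> l \<noteq> \<tau> k \<longrightarrow> lam + u k < r(k,l) + u l)"

lemma fin_S:
  assumes "game_graph n E Vmax Vmin"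
  shows "finite {r (k,l) + u l | l. (k,l) \<in> E}"
proof -
  have "{r (k,l) + u l | l. (k,l) \<in> E} \<subseteq> (\<lambda>l. r (k,l) + u l) ` {1..n}"
    using assms unfolding game_graph_def by blast
  then show ?thesis using finite_subset by blast
qed

lemma bi_iff:
  assumes gg: "game_graph n E Vmax Vmin"
  shows "bias_induced E Vmax Vmin r \<sigma> \<tau> \<longleftrightarrow> (\<exists>lam u. goodpair E Vmax Vmin r lam u \<sigma> \<tau>)"
proof
  assume "bias_induced E Vmax Vmin r \<sigma> \<tau>"
  then obtain lam u where pol: "policies E Vmax Vmin \<sigma> \<tau>" and b: "is_bias E Vmax Vmin r lam u"
    and a1: "\<forall>i\<in>Vmax. r (i, \<sigma> i) + u (\<sigma> i) = Max {r (i,j) + u j | j. (i,j) \<in> E}"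
    and a2: "\<forall>i\<in>Vmin. r (i, \<tau> i) + u (\<tau> i) = Min {r (i,j) + u j | j. (i,j) \<in> E}"
    unfolding bias_induced_def by blast
  have "goodpair E Vmax Vmin r lam u \<sigma> \<tau>"
    unfolding goodpair_def
  proof (intro conjI ballI allI impI)
    show "policies E Vmax Vmin \<sigma> \<tau>" by fact
  next
    fix k assume k: "k \<in> Vmax"
    then show "r (k, \<sigma> k) + u (\<sigma> k) = lam + u k" using a1 b unfolding is_bias_def by auto
  next
    fix k l assume k: "k \<in> Vmax" and kl: "(k,l) \<in> E"
    have "r (k,l) + u l \<le> Max {r (k,j) + u j | j. (k,j) \<in> E}"
      using fin_S[OF gg] kl by (intro Max_ge) auto
    then show "r (k,l) + u l \<le> lam + u k" using b k unfolding is_bias_def by auto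
  next
    fix k assume k: "k \<in> Vmin"
    then show "r (k, \<tau> k) + u (\<tau> k) = lam + u k" using a2 b unfolding is_bias_def by auto
  next
    fix k l assume k: "k \<in> Vmin" and kl: "(k,l) \<in> E"
    have "r (k,l) + u l \<ge> Min {r (k,j) + u j | j. (k,j) \<in> E}"
      using fin_S[OF gg] kl by (intro Min_le) auto
    then show "lam + u k \<le> r (k,l) + u l" using b k unfolding is_bias_def by auto
  qed
  then show "\<exists>lam u. goodpair E Vmax Vmin r lam u \<sigma> \<tau>" by blast
next
  assume "\<exists>lam u. goodpair E Vmax Vmin r lam u \<sigma> \<tau>"
  then obtain lam u where g: "goodpair E Vmax Vmin r lam u \<sigma> \<tau>" by blast
  have pol: "policies E Vmax Vmin \<sigma> \<tau>" using g unfolding goodpair_def by blast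
  have m1: "Max {r (k,j) + u j | j. (k,j) \<in> E} = lam + u k" if k: "k \<in> Vmax" for k
  proof (rule Max_eqI[OF fin_S[OF gg]])
    show "\<And>y. y \<in> {r (k, j) + u j |j. (k, j) \<in> E} \<Longrightarrow> y \<le> lam + u k"
      using g k unfolding goodpair_def by auto
    have "(k, \<sigma> k) \<in> E" using pol k unfolding policies_def by auto
    then show "lam + u k \<in> {r (k, j) + u j |j. (k, j) \<in> E}"
      using g k unfolding goodpair_def by (auto intro!: exI[of _ "\<sigma> k"])
  qed
  have m2: "Min {r (k,j) + u j | j. (k,j) \<in> E} = lam + u k" if k: "k \<in> Vmin" for k
  proof (rule Min_eqI[OF fin_S[OF gg]])
    show "\<And>y. y \<in> {r (k, j) + u j |j. (k, j) \<in> E} \<Longrightarrow> y \<ge> lam + u k"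
      using g k unfolding goodpair_def by auto
    have "(k, \<tau> k) \<in> E" using pol k unfolding policies_def by auto
    then show "lam + u k \<in> {r (k, j) + u j |j. (k, j) \<in> E}"
      using g k unfolding goodpair_def by (auto intro!: exI[of _ "\<tau> k"])
  qed
  show "bias_induced E Vmax Vmin r \<sigma> \<tau>"
    unfolding bias_induced_def is_bias_def
    using pol m1 m2 g unfolding goodpair_def by (intro conjI exI[of _ lam] exI[of _ u]) auto
qed

lemma cyc_exists:
  assumes maps: "\<forall>z\<in>{1..n}. \<phi> z \<in> {1..(n::nat)}" and z: "z \<in> {1..n}"
  shows "\<exists>m p. p > 0 \<and> (\<phi>^^p) ((\<phi>^^m) z) = (\<phi>^^m) z"
proof -
  have inV: "(\<phi>^^t) z \<in> {1..n}" for t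
    by (induct t) (use maps z in auto)
  have "\<not> inj_on (\<lambda>t. (\<phi>^^t) z) {0..n}"
  proof
    assume "inj_on (\<lambda>t. (\<phi>^^t) z) {0..n}"
    then have c: "card ((\<lambda>t. (\<phi>^^t) z) ` {0..n}) = card {0..n}" by (rule card_image)
    have "(\<lambda>t. (\<phi>^^t) z) ` {0..n} \<subseteq> {1..n}" using inV by auto
    then have "card ((\<lambda>t. (\<phi>^^t) z) ` {0..n}) \<le> n" using card_mono[of "{1..n}"] by fastforce
    with c show False by simp
  qed
  then obtain a b where ab: "a \<noteq> b" "(\<phi>^^a) z = (\<phi>^^b) z" unfolding inj_on_def by blast
  have "\<exists>a b. a < b \<and> (\<phi>^^a) z = (\<phi>^^b) z"
  proof (cases "a < b")
    case True then show ?thesis using ab by blast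
  next
    case False then have "b < a" using ab by simp
    then show ?thesis using ab by metis
  qed
  then obtain a b where ab: "a < b" "(\<phi>^^a) z = (\<phi>^^b) z" by blast
  have "(\<phi>^^(b-a)) ((\<phi>^^a) z) = (\<phi>^^(b-a+a)) z" by (simp add: funpow_add)
  also have "\<dots> = (\<phi>^^a) z" using ab by simp
  finally show ?thesis using ab by (intro exI[of _ a] exI[of _ "b-a"]) auto
qed

lemma chain_le:
  fixes d :: "nat \<Rightarrow> real"
  assumes maps: "\<forall>z\<in>V. \<phi> z \<in> V" and step: "\<forall>z\<in>V. \<delta> + d z \<le> d (\<phi> z)" and z: "z \<in> V"
  shows "\<delta> * real t + d z \<le> d ((\<phi>^^t) z) \<and> (\<phi>^^t) z \<in> V"
proof (induct t)
  case 0 show ?case using z by simp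
next
  case (Suc t)
  let ?w = "(\<phi>^^t) z"
  have "\<delta> + d ?w \<le> d (\<phi> ?w)" using step Suc by blast
  then show ?case using Suc maps by (auto simp: algebra_simps)
qed

lemma cyc_follow:
  fixes e :: "nat \<Rightarrow> real"
  assumes maps: "\<forall>z\<in>V. \<phi> z \<in> V" and step: "\<forall>z\<in>V. e z \<le> e (\<phi> z)"
    and str: "\<forall>z\<in>V. \<phi> z \<noteq> f z \<longrightarrow> e z < e (\<phi> z)"
    and yV: "y \<in> V" and p: "p > 0" "(\<phi>^^p) y = y"
  shows "(\<phi>^^t) y = (f^^t) y \<and> e ((\<phi>^^t) y) = e y \<and> (\<phi>^^p) ((\<phi>^^t) y) = (\<phi>^^t) y \<and> (\<phi>^^t) y \<in> V"
proof (induct t)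
  case 0 show ?case using yV p by simp
next
  case (Suc t)
  define w where "w = (\<phi>^^t) y"
  have wV: "w \<in> V" and wp: "(\<phi>^^p) w = w" and we: "e w = e y" and wf: "w = (f^^t) y"
    using Suc unfolding w_def by auto
  have pw: "\<phi> w \<in> V" using maps wV by blast
  have s0: "\<forall>z\<in>V. 0 + e z \<le> e (\<phi> z)" using step by simp
  have "0 * real (p - 1) + e (\<phi> w) \<le> e ((\<phi>^^(p-1)) (\<phi> w))"
    using chain_le[OF maps s0 pw] by blast
  also have "(\<phi>^^(p-1)) (\<phi> w) = (\<phi>^^Suc (p-1)) w" by (simp only: funpow_Suc_right o_apply)
  also have "\<dots> = w" using p wp by simp
  finally have "e (\<phi> w) \<le> e w" by simp
  moreover have "e w \<le> e (\<phi> w)" using step wV by blast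
  ultimately have eq: "e (\<phi> w) = e w" by simp
  then have "\<phi> w = f w" using str wV by force
  moreover have "(\<phi>^^p) (\<phi> w) = \<phi> w" using wp by (metis funpow_swap1)
  ultimately show ?case using eq we wf pw unfolding w_def by simp
qed


lemma xi_unique:
  assumes "(\<sigma>, \<tau>) \<in> Xi n E Vmax Vmin" "A \<in> cycles n (pol_map Vmax \<sigma> \<tau>)" "B \<in> cycles n (pol_map Vmax \<sigma> \<tau>)"
  shows "A = B"
  using assms unfolding Xi_def by auto

lemma cyc_mem:
  assumes "y \<in> {1..n}" "p > 0" "(f^^p) y = y"
  shows "{(f ^^ m) y | m. True} \<in> cycles n f"
  using assms unfolding cycles_def by blast

lemma key:
  assumes gg: "game_graph n E Vmax Vmin" and xi: "(\<sigma>, \<tau>) \<in> Xi n E Vmax Vmin"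
    and g1: "goodpair E Vmax Vmin r lam u \<sigma> \<tau>" and st: "strictp E Vmax Vmin r lam u \<sigma> \<tau>"
    and g2: "goodpair E Vmax Vmin r lam' u' \<sigma>' \<tau>'"
  shows "(\<forall>k\<in>Vmax. \<sigma>' k = \<sigma> k) \<and> (\<forall>k\<in>Vmin. \<tau>' k = \<tau> k)"
proof -
  define V where "V = {1..n}"
  have EV: "E \<subseteq> V \<times> V" and VV: "Vmax \<union> Vmin = V" and disj: "Vmax \<inter> Vmin = {}"
    using gg unfolding game_graph_def V_def by auto
  define f where "f = pol_map Vmax \<sigma> \<tau>"
  define g where "g = pol_map Vmax \<sigma> \<tau>'"
  define h where "h = pol_map Vmax \<sigma>' \<tau>"
  define d where "d = (\<lambda>z. u z - u' z)"
  define \<delta> where "\<delta> = lam - lam'"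
  have p1: "\<forall>k\<in>Vmax. (k, \<sigma> k) \<in> E" "\<forall>k\<in>Vmin. (k, \<tau> k) \<in> E"
    using g1 unfolding goodpair_def policies_def by auto
  have p2: "\<forall>k\<in>Vmax. (k, \<sigma>' k) \<in> E" "\<forall>k\<in>Vmin. (k, \<tau>' k) \<in> E"
    using g2 unfolding goodpair_def policies_def by auto
  have fmaps: "\<forall>z\<in>V. f z \<in> V" using p1 EV VV unfolding f_def pol_map_def by auto
  have gmaps: "\<forall>z\<in>V. g z \<in> V" using p1 p2 EV VV unfolding g_def pol_map_def by auto
  have hmaps: "\<forall>z\<in>V. h z \<in> V" using p1 p2 EV VV unfolding h_def pol_map_def by auto
  have G: "\<forall>z\<in>V. \<delta> + d z \<le> d (g z)"
  proof
    fix z assume z: "z \<in> V"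
    show "\<delta> + d z \<le> d (g z)"
    proof (cases "z \<in> Vmax")
      case True
      then have "r (z, \<sigma> z) + u (\<sigma> z) = lam + u z" "r (z, \<sigma> z) + u' (\<sigma> z) \<le> lam' + u' z"
        using g1 g2 p1 unfolding goodpair_def by auto
      then show ?thesis using True unfolding g_def pol_map_def d_def \<delta>_def by simp
    next
      case False
      then have zm: "z \<in> Vmin" using z VV by auto
      then have "lam + u z \<le> r (z, \<tau>' z) + u (\<tau>' z)" "r (z, \<tau>' z) + u' (\<tau>' z) = lam' + u' z"
        using g1 g2 p2 unfolding goodpair_def by auto
      then show ?thesis using False unfolding g_def pol_map_def d_def \<delta>_def by simp
    qed
  qed
  have Gs: "\<forall>z\<in>V. g z \<noteq> f z \<longrightarrow> \<delta> + d z < d (g z)"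
  proof (intro ballI impI)
    fix z assume z: "z \<in> V" and ne: "g z \<noteq> f z"
    then have zm: "z \<in> Vmin" "z \<notin> Vmax" using VV unfolding g_def f_def pol_map_def by auto
    with ne have ne': "\<tau>' z \<noteq> \<tau> z" unfolding g_def f_def pol_map_def by auto
    have "lam + u z < r (z, \<tau>' z) + u (\<tau>' z)" using st zm ne' p2 unfolding strictp_def by auto
    moreover have "r (z, \<tau>' z) + u' (\<tau>' z) = lam' + u' z"
      using g2 zm unfolding goodpair_def by auto
    ultimately show "\<delta> + d z < d (g z)" using zm unfolding g_def pol_map_def d_def \<delta>_def by simp
  qed
  have H: "\<forall>z\<in>V. (-\<delta>) + (-d z) \<le> - d (h z)"
  proof
    fix z assume z: "z \<in> V"
    show "(-\<delta>) + (-d z) \<le> - d (h z)"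
    proof (cases "z \<in> Vmax")
      case True
      then have "r (z, \<sigma>' z) + u (\<sigma>' z) \<le> lam + u z" "r (z, \<sigma>' z) + u' (\<sigma>' z) = lam' + u' z"
        using g1 g2 p2 unfolding goodpair_def by auto
      then show ?thesis using True unfolding h_def pol_map_def d_def \<delta>_def by simp
    next
      case False
      then have zm: "z \<in> Vmin" using z VV by auto
      then have "lam + u z = r (z, \<tau> z) + u (\<tau> z)" "r (z, \<tau> z) + u' (\<tau> z) \<ge> lam' + u' z"
        using g1 g2 p1 unfolding goodpair_def by auto
      then show ?thesis using False unfolding h_def pol_map_def d_def \<delta>_def by simp
    qed
  qed
  have Hs: "\<forall>z\<in>V. h z \<noteq> f z \<longrightarrow> (-\<delta>) + (-d z) < - d (h z)"
  proof (intro ballI impI)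
    fix z assume z: "z \<in> V" and ne: "h z \<noteq> f z"
    then have zm: "z \<in> Vmax" unfolding h_def f_def pol_map_def by (cases "z \<in> Vmax") auto
    with ne have ne': "\<sigma>' z \<noteq> \<sigma> z" unfolding h_def f_def pol_map_def by auto
    have "r (z, \<sigma>' z) + u (\<sigma>' z) < lam + u z" using st zm ne' p2 unfolding strictp_def by auto
    moreover have "r (z, \<sigma>' z) + u' (\<sigma>' z) = lam' + u' z"
      using g2 zm unfolding goodpair_def by auto
    ultimately show "(-\<delta>) + (-d z) < - d (h z)" using zm unfolding h_def pol_map_def d_def \<delta>_def by simp
  qed
  have main: "g k = f k \<and> h k = f k" if kV: "k \<in> V" for k
  proof -
    have gkV: "g k \<in> V" and hkV: "h k \<in> V" using kV gmaps hmaps by auto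
    obtain m p where mp: "p > 0" "(g^^p) ((g^^m) (g k)) = (g^^m) (g k)"
      using cyc_exists[of n g "g k"] gmaps gkV unfolding V_def by blast
    define y where "y = (g^^m) (g k)"
    obtain m' p' where mp': "p' > 0" "(h^^p') ((h^^m') (h k)) = (h^^m') (h k)"
      using cyc_exists[of n h "h k"] hmaps hkV unfolding V_def by blast
    define y' where "y' = (h^^m') (h k)"
    have yV: "y \<in> V" using chain_le[OF gmaps G gkV] unfolding y_def by blast
    have y'V: "y' \<in> V" using chain_le[OF hmaps H hkV] unfolding y'_def by blast
    have "\<delta> * real p + d y \<le> d ((g^^p) y)" using chain_le[OF gmaps G yV] by blast
    then have "\<delta> \<le> 0" using mp unfolding y_def
      by (simp add: mult_le_0_iff)
    have "(-\<delta>) * real p' + (- d y') \<le> - d ((h^^p') y')" using chain_le[OF hmaps H y'V] by blast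
    then have "-\<delta> \<le> 0" using mp' unfolding y'_def
      by (simp add: zero_le_mult_iff)
    have d0: "\<delta> = 0" using \<open>\<delta> \<le> 0\<close> \<open>-\<delta> \<le> 0\<close> by simp
    have G0: "\<forall>z\<in>V. d z \<le> d (g z)" using G d0 by simp
    have Gs0: "\<forall>z\<in>V. g z \<noteq> f z \<longrightarrow> d z < d (g z)" using Gs d0 by simp
    have H0: "\<forall>z\<in>V. -d z \<le> - d (h z)" using H d0 by simp
    have Hs0: "\<forall>z\<in>V. h z \<noteq> f z \<longrightarrow> - d z < - d (h z)" using Hs d0 by simp
    have fy: "\<And>t. (g^^t) y = (f^^t) y \<and> d ((g^^t) y) = d y"
      using cyc_follow[OF gmaps G0 Gs0 yV mp(1)] mp(2) unfolding y_def by blast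
    have fy': "\<And>t. (h^^t) y' = (f^^t) y' \<and> - d ((h^^t) y') = - d y'"
      using cyc_follow[OF hmaps H0 Hs0 y'V mp'(1)] mp'(2) unfolding y'_def by blast
    have c1: "{(f ^^ t) y | t. True} \<in> cycles n f"
      using cyc_mem[of y n p f] yV mp fy[of p] unfolding V_def y_def by auto
    have c2: "{(f ^^ t) y' | t. True} \<in> cycles n f"
      using cyc_mem[of y' n p' f] y'V mp' fy'[of p'] unfolding V_def y'_def by auto
    have "{(f ^^ t) y | t. True} = {(f ^^ t) y' | t. True}"
      using xi_unique[OF xi] c1 c2 unfolding f_def by blast
    moreover have "y' \<in> {(f ^^ t) y' | t. True}" by (auto intro: exI[of _ 0])
    ultimately obtain s where "y' = (f^^s) y" by auto
    then have dyy: "d y' = d y" using fy[of s] by metis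
    have a1: "d (g k) \<le> d y" using chain_le[OF gmaps _ gkV, of 0 d m] G0 unfolding y_def by simp
    have a2: "- d (h k) \<le> - d y'" using chain_le[OF hmaps _ hkV, of 0 "\<lambda>z. - d z" m'] H0 unfolding y'_def by simp
    have a3: "d k \<le> d (g k)" "- d k \<le> - d (h k)" using G0 H0 kV by auto
    have e1: "d k = d (g k)" "d k = d (h k)" using a1 a2 a3 dyy by linarith+
    then show ?thesis using Gs0 Hs0 kV by force
  qed
  show ?thesis
  proof (intro conjI ballI)
    fix k assume k: "k \<in> Vmax"
    then have "h k = f k" using main VV by blast
    then show "\<sigma>' k = \<sigma> k" using k unfolding h_def f_def pol_map_def by simp
  next
    fix k assume k: "k \<in> Vmin"
    then have "g k = f k" "k \<notin> Vmax" using main VV disj by blast+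
    then show "\<tau>' k = \<tau> k" unfolding g_def f_def pol_map_def by simp
  qed
qed


lemma lam_u_pol:
  assumes gg: "game_graph n E Vmax Vmin" and xi: "(\<sigma>, \<tau>) \<in> Xi n E Vmax Vmin"
    and g1: "goodpair E Vmax Vmin r lam u \<sigma> \<tau>"
  shows "lam_pol n Vmax \<sigma> \<tau> r = lam \<and>
    (\<forall>a\<in>{1..n}. u_pol n Vmax \<sigma> \<tau> r a = u a - u (Min (the_cycle n Vmax \<sigma> \<tau>)))"
proof -
  define V where "V = {1..n}"
  have EV: "E \<subseteq> V \<times> V" and VV: "Vmax \<union> Vmin = V"
    using gg unfolding game_graph_def V_def by auto
  define f where "f = pol_map Vmax \<sigma> \<tau>"
  have p1: "\<forall>k\<in>Vmax. (k, \<sigma> k) \<in> E" "\<forall>k\<in>Vmin. (k, \<tau> k) \<in> E"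
    using g1 unfolding goodpair_def policies_def by auto
  have fmaps: "\<forall>z\<in>V. f z \<in> V" using p1 EV VV unfolding f_def pol_map_def by auto
  have feq: "\<forall>z\<in>V. r (z, f z) + u (f z) = lam + u z"
    using g1 VV unfolding goodpair_def f_def pol_map_def by auto
  have ex1: "\<exists>!C. C \<in> cycles n f" using xi unfolding Xi_def f_def by auto
  define C0 where "C0 = the_cycle n Vmax \<sigma> \<tau>"
  have C0c: "C0 \<in> cycles n f" using theI'[OF ex1] unfolding C0_def the_cycle_def f_def .
  then obtain i0 k where i0: "i0 \<in> V" "k > 0" "(f^^k) i0 = i0" and C0: "C0 = {(f^^m) i0 | m. True}"
    unfolding cycles_def V_def by blast
  have iter: "(f^^t) z \<in> V" if "z \<in> V" for z t
    using chain_le[OF fmaps _ that, of 0 "\<lambda>_. 0" t] by simp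
  have C0V: "C0 \<subseteq> V" using C0 iter i0 by auto
  have finC: "finite C0" using C0V finite_subset unfolding V_def by blast
  have i0C: "i0 \<in> C0" unfolding C0 by (auto intro: exI[of _ 0])
  have fC: "f ` C0 = C0"
  proof
    show "f ` C0 \<subseteq> C0"
    proof
      fix x assume "x \<in> f ` C0"
      then obtain m where "x = f ((f^^m) i0)" unfolding C0 by blast
      then have "x = (f^^Suc m) i0" by simp
      then show "x \<in> C0" unfolding C0 by blast
    qed
    show "C0 \<subseteq> f ` C0"
    proof
      fix x assume "x \<in> C0"
      then obtain m where x: "x = (f^^m) i0" unfolding C0 by blast
      have "(f^^Suc (m + k - 1)) i0 = (f^^(m+k)) i0" using i0 by simp
      also have "\<dots> = (f^^m) ((f^^k) i0)" by (simp add: funpow_add)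
      also have "\<dots> = x" using i0 x by simp
      finally have "f ((f^^(m+k-1)) i0) = x" by simp
      then show "x \<in> f ` C0" unfolding C0 by blast
    qed
  qed
  have inj: "inj_on f C0" using eq_card_imp_inj_on[OF finC, of f] fC by simp
  have "(\<Sum>z\<in>C0. r (z, f z)) = (\<Sum>z\<in>C0. lam + u z - u (f z))"
    using feq C0V by (intro sum.cong) (auto simp: algebra_simps)
  also have "\<dots> = lam * card C0 + (\<Sum>z\<in>C0. u z) - (\<Sum>z\<in>C0. u (f z))"
    by (simp add: sum.distrib sum_subtractf)
  also have "(\<Sum>z\<in>C0. u (f z)) = (\<Sum>z\<in>C0. u z)"
    using sum.reindex[OF inj, of u] fC by simp
  finally have sumeq: "(\<Sum>z\<in>C0. r (z, f z)) = lam * card C0" by simp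
  have cpos: "card C0 > 0" using finC i0C card_gt_0_iff by blast
  have lp: "lam_pol n Vmax \<sigma> \<tau> r = lam"
    unfolding lam_pol_def Let_def using sumeq cpos unfolding C0_def f_def by simp
  define c where "c = Min C0"
  have cC: "c \<in> C0" unfolding c_def using finC i0C by (intro Min_in) auto
  have up: "u_pol n Vmax \<sigma> \<tau> r a = u a - u c" if aV: "a \<in> V" for a
  proof -
    obtain m p where mp: "p > 0" "(f^^p) ((f^^m) a) = (f^^m) a"
      using cyc_exists[of n f a] fmaps aV unfolding V_def by blast
    have yV: "(f^^m) a \<in> V" using iter aV by blast
    have "{(f^^t) ((f^^m) a) | t. True} \<in> cycles n f" using cyc_mem[of _ n p f] yV mp unfolding V_def by blast
    then have "{(f^^t) ((f^^m) a) | t. True} = C0" using ex1 C0c by blast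
    then obtain s where "c = (f^^s) ((f^^m) a)" using cC by blast
    then have "(f^^(s+m)) a = c" by (simp add: funpow_add)
    then have ex: "\<exists>K. (f^^K) a = c" by blast
    define K where "K = (LEAST K. (f^^K) a = c)"
    have fK: "(f^^K) a = c" unfolding K_def using LeastI_ex[OF ex] .
    have "u_pol n Vmax \<sigma> \<tau> r a = (\<Sum>t<K. r ((f ^^ t) a, f ((f ^^ t) a)) - lam)"
      unfolding u_pol_def Let_def lp K_def c_def C0_def f_def by simp
    also have "\<dots> = (\<Sum>t<K. u ((f^^t) a) - u ((f^^Suc t) a))"
      using feq iter[OF aV] by (intro sum.cong) (auto simp: algebra_simps)
    also have "\<dots> = u ((f^^0) a) - u ((f^^K) a)" by (rule sum_lessThan_telescope')
    finally show ?thesis using fK by simp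
  qed
  show ?thesis using lp up unfolding V_def c_def C0_def by blast
qed


lemma in_P:
  assumes gg: "game_graph n E Vmax Vmin" and xi: "(\<sigma>, \<tau>) \<in> Xi n E Vmax Vmin"
    and g1: "goodpair E Vmax Vmin r lam u \<sigma> \<tau>" and st: "strictp E Vmax Vmin r lam u \<sigma> \<tau>"
  shows "r \<in> P_set E Vmax Vmin \<sigma> \<tau>"
  unfolding P_set_def
proof (intro CollectI conjI allI impI)
  show "bias_induced E Vmax Vmin r \<sigma> \<tau>" using bi_iff[OF gg] g1 by blast
next
  fix \<sigma>' \<tau>' assume "bias_induced E Vmax Vmin r \<sigma>' \<tau>'"
  then obtain lam' u' where "goodpair E Vmax Vmin r lam' u' \<sigma>' \<tau>'" using bi_iff[OF gg] by blast
  then have "(\<forall>i\<in>Vmax. \<sigma>' i = \<sigma> i) \<and> (\<forall>i\<in>Vmin. \<tau>' i = \<tau> i)" using key[OF gg xi g1 st] by blast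
  then show "\<forall>i\<in>Vmax. \<sigma>' i = \<sigma> i" "\<forall>i\<in>Vmin. \<tau>' i = \<tau> i" by auto
qed

lemma P_strict:
  assumes gg: "game_graph n E Vmax Vmin" and rP: "r \<in> P_set E Vmax Vmin \<sigma> \<tau>"
    and g1: "goodpair E Vmax Vmin r lam u \<sigma> \<tau>"
  shows "strictp E Vmax Vmin r lam u \<sigma> \<tau>"
  unfolding strictp_def
proof (intro conjI ballI allI impI)
  have disj: "Vmax \<inter> Vmin = {}" using gg unfolding game_graph_def by auto
  have uq: "\<And>\<sigma>' \<tau>'. bias_induced E Vmax Vmin r \<sigma>' \<tau>' \<Longrightarrow> (\<forall>i\<in>Vmax. \<sigma>' i = \<sigma> i) \<and> (\<forall>i\<in>Vmin. \<tau>' i = \<tau> i)"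
    using rP unfolding P_set_def by blast
  fix k l assume k: "k \<in> Vmax" and kl: "(k,l) \<in> E" and ne: "l \<noteq> \<sigma> k"
  have le: "r (k,l) + u l \<le> lam + u k" using g1 k kl unfolding goodpair_def by auto
  show "r (k,l) + u l < lam + u k"
  proof (rule ccontr)
    assume "\<not> ?thesis"
    with le have eq: "r (k,l) + u l = lam + u k" by simp
    have "goodpair E Vmax Vmin r lam u (\<sigma>(k:=l)) \<tau>"
      using g1 eq kl k unfolding goodpair_def policies_def by auto
    then have "bias_induced E Vmax Vmin r (\<sigma>(k:=l)) \<tau>" using bi_iff[OF gg] by blast
    from uq[OF this] k ne show False by auto
  qed
next
  have uq: "\<And>\<sigma>' \<tau>'. bias_induced E Vmax Vmin r \<sigma>' \<tau>' \<Longrightarrow> (\<forall>i\<in>Vmax. \<sigma>' i = \<sigma> i) \<and> (\<forall>i\<in>Vmin. \<tau>' i = \<tau> i)"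
    using rP unfolding P_set_def by blast
  fix k l assume k: "k \<in> Vmin" and kl: "(k,l) \<in> E" and ne: "l \<noteq> \<tau> k"
  have le: "lam + u k \<le> r (k,l) + u l" using g1 k kl unfolding goodpair_def by auto
  show "lam + u k < r (k,l) + u l"
  proof (rule ccontr)
    assume "\<not> ?thesis"
    with le have eq: "r (k,l) + u l = lam + u k" by simp
    have "goodpair E Vmax Vmin r lam u \<sigma> (\<tau>(k:=l))"
      using g1 eq kl k unfolding goodpair_def policies_def by auto
    then have "bias_induced E Vmax Vmin r \<sigma> (\<tau>(k:=l))" using bi_iff[OF gg] by blast
    from uq[OF this] k ne show False by auto
  qed
qed

theorem mainTheorem11:
  fixes n :: nat and E :: "(nat \<times> nat) set" and Vmax Vmin :: "nat set"
    and r :: "nat \<times> nat \<Rightarrow> real" and \<sigma> \<tau> :: "nat \<Rightarrow> nat"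
  assumes "game_graph n E Vmax Vmin"
    and "ergodic E Vmax Vmin"
    and "(\<sigma>, \<tau>) \<in> Xi n E Vmax Vmin"
    and "r \<in> P_set E Vmax Vmin \<sigma> \<tau>"
  shows "(\<forall>i j x. (i,j) \<in> E \<longrightarrow> i \<in> Vmin \<longrightarrow> j \<noteq> \<tau> i \<longrightarrow>
            x > lam_pol n Vmax \<sigma> \<tau> r + u_pol n Vmax \<sigma> \<tau> r i - u_pol n Vmax \<sigma> \<tau> r j \<longrightarrow>
            r((i,j) := x) \<in> P_set E Vmax Vmin \<sigma> \<tau>)
       \<and> (\<forall>i j x. (i,j) \<in> E \<longrightarrow> i \<in> Vmax \<longrightarrow> j \<noteq> \<sigma> i \<longrightarrow>
            x < lam_pol n Vmax \<sigma> \<tau> r + u_pol n Vmax \<sigma> \<tau> r i - u_pol n Vmax \<sigma> \<tau> r j \<longrightarrow>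
            r((i,j) := x) \<in> P_set E Vmax Vmin \<sigma> \<tau>)"
proof -
  note gg = assms(1) and xi = assms(3) and rP = assms(4)
  have EV: "E \<subseteq> {1..n} \<times> {1..n}" and disj: "Vmax \<inter> Vmin = {}"
    using gg unfolding game_graph_def by auto
  obtain lam u where g1: "goodpair E Vmax Vmin r lam u \<sigma> \<tau>"
    using rP bi_iff[OF gg] unfolding P_set_def by blast
  have st: "strictp E Vmax Vmin r lam u \<sigma> \<tau>" using P_strict[OF gg rP g1] .
  obtain c where lu: "lam_pol n Vmax \<sigma> \<tau> r = lam" "\<forall>a\<in>{1..n}. u_pol n Vmax \<sigma> \<tau> r a = u a - u c"
    using lam_u_pol[OF gg xi g1] by blast
  have conv: "lam_pol n Vmax \<sigma> \<tau> r + u_pol n Vmax \<sigma> \<tau> r i - u_pol n Vmax \<sigma> \<tau> r j = lam + u i - u j"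
    if "(i,j) \<in> E" for i j using that EV lu by auto
  show ?thesis
  proof (intro conjI allI impI)
    fix i j x assume ij: "(i,j) \<in> E" and i: "i \<in> Vmin" and ne: "j \<noteq> \<tau> i"
      and x: "lam_pol n Vmax \<sigma> \<tau> r + u_pol n Vmax \<sigma> \<tau> r i - u_pol n Vmax \<sigma> \<tau> r j < x"
    have x': "lam + u i < x + u j" using x conv[OF ij] by simp
    have iM: "i \<notin> Vmax" using i disj by auto
    have "goodpair E Vmax Vmin (r((i,j) := x)) lam u \<sigma> \<tau>"
      using g1 x' iM ne unfolding goodpair_def by (auto simp: less_imp_le)
    moreover have "strictp E Vmax Vmin (r((i,j) := x)) lam u \<sigma> \<tau>"
      using st x' iM ne unfolding strictp_def by auto
    ultimately show "r((i,j) := x) \<in> P_set E Vmax Vmin \<sigma> \<tau>" using in_P[OF gg xi] by blast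
  next
    fix i j x assume ij: "(i,j) \<in> E" and i: "i \<in> Vmax" and ne: "j \<noteq> \<sigma> i"
      and x: "x < lam_pol n Vmax \<sigma> \<tau> r + u_pol n Vmax \<sigma> \<tau> r i - u_pol n Vmax \<sigma> \<tau> r j"
    have x': "x + u j < lam + u i" using x conv[OF ij] by simp
    have iM: "i \<notin> Vmin" using i disj by auto
    have "goodpair E Vmax Vmin (r((i,j) := x)) lam u \<sigma> \<tau>"
      using g1 x' iM ne unfolding goodpair_def by (auto simp: less_imp_le)
    moreover have "strictp E Vmax Vmin (r((i,j) := x)) lam u \<sigma> \<tau>"
      using st x' iM ne unfolding strictp_def by auto
    ultimately show "r((i,j) := x) \<in> P_set E Vmax Vmin \<sigma> \<tau>" using in_P[OF gg xi] by blast
  qed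
qed

end
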